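(* Let $k$ be a nonnegative integer or half an integer and suppose $F_k$ is a holomorphic function on $\mathfrak H$ satisfying $F_k''-\frac{k+1}6E_2F_k'+\frac{k(k+1)}{12}E_2'F_k=0$. Then $$\partial_{k+6}([F_k,E_4])=\frac{k-4}{18}[F_k,E_6]\quad\text{and}\quad \partial_{k+8}([F_k,E_6])=\frac{k-6}{8}E_4[F_k,E_4],$$ where in the brackets $F_k$ is regarded as of weight $k$.
   Context: $\tau\in\mathfrak H$, $q=e^{2\pi i\tau}$, ${}'=\frac1{2\pi i}\frac d{d\tau}$. $E_2=1-24\sum_{n\ge1}\sigma_1(n)q^n$, $E_4=1+240\sum\sigma_3(n)q^n$, $E_6=1-504\sum\sigma_5(n)q^n$, $\sigma_m(n)=\sum_{d\mid n}d^m$. For a parameter $w$, $\partial_w(f)=f'-\frac{w}{12}E_2f$. Rankin–Cohen bracket: for $f$ of weight $a$ and $g$ of weight $b$, $[f,g]=afg'-bf'g$ (so $[F_k,E_4]$ has weight $k+6$, $[F_k,E_6]$ weight $k+8$); $E_4,E_6$ have weights $4,6$. *)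

theory Defs
  imports "HOL-Complex_Analysis.Complex_Analysis"
begin

definition upper_half_plane :: "complex set" where
  "upper_half_plane = {z. Im z > 0}"

definition qnome :: "complex \<Rightarrow> complex" where
  "qnome \<tau> = exp (2 * of_real pi * \<i> * \<tau>)"

definition divsigma :: "nat \<Rightarrow> nat \<Rightarrow> nat" where
  "divsigma m n = (\<Sum>d\<in>{d. d dvd n}. d ^ m)"

definition eis_series :: "nat \<Rightarrow> complex \<Rightarrow> complex" where
  "eis_series m \<tau> = (\<Sum>n. of_nat (divsigma m (Suc n)) * qnome \<tau> ^ Suc n)"

definition E2 :: "complex \<Rightarrow> complex" where
  "E2 \<tau> = 1 - 24 * eis_series 1 \<tau>"

definition E4 :: "complex \<Rightarrow> complex" where
  "E4 \<tau> = 1 + 240 * eis_series 3 \<tau>"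

definition E6 :: "complex \<Rightarrow> complex" where
  "E6 \<tau> = 1 - 504 * eis_series 5 \<tau>"

text \<open>The normalized derivative f' = (1/(2 pi i)) df/dtau.\<close>
definition qderiv :: "(complex \<Rightarrow> complex) \<Rightarrow> complex \<Rightarrow> complex" where
  "qderiv f \<tau> = deriv f \<tau> / (2 * of_real pi * \<i>)"

definition serre_deriv :: "complex \<Rightarrow> (complex \<Rightarrow> complex) \<Rightarrow> complex \<Rightarrow> complex" where
  "serre_deriv w f \<tau> = qderiv f \<tau> - w / 12 * E2 \<tau> * f \<tau>"

definition rc_bracket :: "complex \<Rightarrow> complex \<Rightarrow> (complex \<Rightarrow> complex) \<Rightarrow> (complex \<Rightarrow> complex) \<Rightarrow> complex \<Rightarrow> complex" where
  "rc_bracket a b f g \<tau> = a * f \<tau> * qderiv g \<tau> - b * qderiv f \<tau> * g \<tau>"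

end

theory Submission
  imports Defs "HOL-Analysis.FPS_Convergence"
begin


definition TT :: "nat \<Rightarrow> (nat \<times> nat \<times> nat \<times> nat) set" where
  "TT N = {(a,b,x,y). 0<a \<and> 0<b \<and> 0<x \<and> 0<y \<and> a*x+b*y = N}"

lemma TT_finite: "finite (TT N)"
proof -
  have "TT N \<subseteq> {..N} \<times> {..N} \<times> {..N} \<times> {..N}"
  proof
    fix v assume "v \<in> TT N"
    then obtain a b x y where v: "v = (a,b,x,y)" "0<a" "0<b" "0<x" "0<y" "a*x+b*y = N"
      unfolding TT_def by auto
    have "a \<le> a*x" "x \<le> a*x" "b \<le> b*y" "y \<le> b*y" using v by auto
    then have "a \<le> N \<and> b \<le> N \<and> x \<le> N \<and> y \<le> N" using v(6) by linarith
    then show "v \<in> {..N} \<times> {..N} \<times> {..N} \<times> {..N}" using v(1) by auto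
  qed
  then show ?thesis by (rule finite_subset) auto
qed

lemma TT_mem: "(a,b,x,y) \<in> TT N \<longleftrightarrow> 0<a \<and> 0<b \<and> 0<x \<and> 0<y \<and> a*x+b*y = N"
  by (simp add: TT_def)

lemma TT_key:
  fixes P :: "int \<Rightarrow> int \<Rightarrow> int"
  assumes inv: "\<And>u v. P (u - v) v = P u (v - u)"
  shows "(\<Sum>(a,b,x,y)\<in>TT N. P (int x) (int y))
       = (\<Sum>(a,b,x,y)\<in>TT N. P (int x) (int y - int x))
         + (\<Sum>(a,b,x,y)\<in>{(a,b,x,y). (a,b,x,y) \<in> TT N \<and> a = b}. P (int x) (int y))
         - (\<Sum>(a,b,x,y)\<in>{(a,b,x,y). (a,b,x,y) \<in> TT N \<and> x = y}. P (int x) 0)"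
proof -
  define f where "f = (\<lambda>(a::nat,b::nat,x::nat,y::nat). P (int x) (int y))"
  define g where "g = (\<lambda>(a::nat,b::nat,x::nat,y::nat). P (int x) (int y - int x))"
  define Sgt where "Sgt = {(a,b,x,y). (a,b,x,y) \<in> TT N \<and> b < a}"
  define Slt where "Slt = {(a,b,x,y). (a,b,x,y) \<in> TT N \<and> a < b}"
  define Seq where "Seq = {(a,b,x,y). (a,b,x,y) \<in> TT N \<and> a = b}"
  define Xgt where "Xgt = {(a,b,x,y). (a,b,x,y) \<in> TT N \<and> x < y}"
  define Xlt where "Xlt = {(a,b,x,y). (a,b,x,y) \<in> TT N \<and> y < x}"
  define Xeq where "Xeq = {(a,b,x,y). (a,b,x,y) \<in> TT N \<and> x = y}"
  have fin: "finite Sgt" "finite Slt" "finite Seq" "finite Xgt" "finite Xlt" "finite Xeq"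
    unfolding Sgt_def Slt_def Seq_def Xgt_def Xlt_def Xeq_def
    by (auto intro: finite_subset[OF _ TT_finite])
  have T1: "TT N = Sgt \<union> Slt \<union> Seq"
    unfolding Sgt_def Slt_def Seq_def by (auto simp: TT_def)
  have T2: "TT N = Xgt \<union> Xlt \<union> Xeq"
    unfolding Xgt_def Xlt_def Xeq_def by (auto simp: TT_def)
  have s1: "sum f (TT N) = sum f Sgt + sum f Slt + sum f Seq"
    unfolding T1 using fin
    by (subst sum.union_disjoint; (auto simp: Sgt_def Slt_def Seq_def)?)+
  have s2: "sum g (TT N) = sum g Xgt + sum g Xlt + sum g Xeq"
    unfolding T2 using fin
    by (subst sum.union_disjoint; (auto simp: Xgt_def Xlt_def Xeq_def)?)+
  define h1 where "h1 = (\<lambda>(a::nat,b::nat,x::nat,y::nat). (a+b, b, x, y-x))"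
  define k1 where "k1 = (\<lambda>(a::nat,b::nat,x::nat,y::nat). (a-b, b, x, x+y))"
  have b1: "bij_betw h1 Xgt Sgt"
  proof (rule bij_betw_byWitness[where f'=k1])
    show "\<forall>v\<in>Xgt. k1 (h1 v) = v" by (auto simp: Xgt_def h1_def k1_def)
    show "\<forall>v\<in>Sgt. h1 (k1 v) = v" by (auto simp: Sgt_def h1_def k1_def)
    show "h1 ` Xgt \<subseteq> Sgt"
    proof
      fix w assume "w \<in> h1 ` Xgt"
      then obtain a b x y where w: "w = h1 (a,b,x,y)" "(a,b,x,y) \<in> TT N" "x < y"
        by (auto simp: Xgt_def)
      have "(a+b)*x + b*(y-x) = a*x+b*y" using w(3)
        by (simp add: algebra_simps diff_mult_distrib2)
      then show "w \<in> Sgt" using w by (auto simp: Sgt_def h1_def TT_def)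
    qed
    show "k1 ` Sgt \<subseteq> Xgt"
    proof
      fix w assume "w \<in> k1 ` Sgt"
      then obtain a b x y where w: "w = k1 (a,b,x,y)" "(a,b,x,y) \<in> TT N" "b < a"
        by (auto simp: Sgt_def)
      have "b*x \<le> a*x" using w(3) by simp
      then have "(a-b)*x + b*(x+y) = a*x+b*y"
        by (simp add: diff_mult_distrib distrib_left)
      then show "w \<in> Xgt" using w by (auto simp: Xgt_def k1_def TT_def)
    qed
  qed
  define h2 where "h2 = (\<lambda>(a::nat,b::nat,x::nat,y::nat). (a, a+b, x-y, y))"
  define k2 where "k2 = (\<lambda>(a::nat,b::nat,x::nat,y::nat). (a, b-a, x+y, y))"
  have b2: "bij_betw h2 Xlt Slt"
  proof (rule bij_betw_byWitness[where f'=k2])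
    show "\<forall>v\<in>Xlt. k2 (h2 v) = v" by (auto simp: Xlt_def h2_def k2_def)
    show "\<forall>v\<in>Slt. h2 (k2 v) = v" by (auto simp: Slt_def h2_def k2_def)
    show "h2 ` Xlt \<subseteq> Slt"
    proof
      fix w assume "w \<in> h2 ` Xlt"
      then obtain a b x y where w: "w = h2 (a,b,x,y)" "(a,b,x,y) \<in> TT N" "y < x"
        by (auto simp: Xlt_def)
      have "a*y \<le> a*x" using w(3) by simp
      then have "a*(x-y) + (a+b)*y = a*x+b*y"
        by (simp add: diff_mult_distrib2 distrib_right)
      then show "w \<in> Slt" using w by (auto simp: Slt_def h2_def TT_def)
    qed
    show "k2 ` Slt \<subseteq> Xlt"
    proof
      fix w assume "w \<in> k2 ` Slt"
      then obtain a b x y where w: "w = k2 (a,b,x,y)" "(a,b,x,y) \<in> TT N" "a < b"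
        by (auto simp: Slt_def)
      have "a*(x+y) + (b-a)*y = a*x+b*y" using w(3)
        by (simp add: algebra_simps diff_mult_distrib)
      then show "w \<in> Xlt" using w by (auto simp: Xlt_def k2_def TT_def)
    qed
  qed
  have e1: "sum f Sgt = sum g Xgt"
  proof -
    have "sum f Sgt = sum (\<lambda>v. f (h1 v)) Xgt" by (rule sum.reindex_bij_betw[OF b1, symmetric])
    also have "\<dots> = sum g Xgt"
      by (rule sum.cong) (auto simp: Xgt_def f_def g_def h1_def of_nat_diff)
    finally show ?thesis .
  qed
  have e2: "sum f Slt = sum g Xlt"
  proof -
    have "sum f Slt = sum (\<lambda>v. f (h2 v)) Xlt" by (rule sum.reindex_bij_betw[OF b2, symmetric])
    also have "\<dots> = sum g Xlt"
    proof (rule sum.cong)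
      fix v assume "v \<in> Xlt"
      then obtain a b x y where v: "v = (a,b,x,y)" "y < x" by (auto simp: Xlt_def)
      have "f (h2 v) = P (int x - int y) (int y)" using v by (simp add: f_def h2_def of_nat_diff)
      also have "\<dots> = g v" using v inv by (simp add: g_def)
      finally show "f (h2 v) = g v" .
    qed simp
    finally show ?thesis .
  qed
  have e3: "sum g Xeq = (\<Sum>(a,b,x,y)\<in>Xeq. P (int x) 0)"
    by (rule sum.cong) (auto simp: Xeq_def g_def)
  show ?thesis
    using s1 s2 e1 e2 e3 unfolding f_def[symmetric] g_def[symmetric] Seq_def[symmetric] Xeq_def[symmetric]
    by simp
qed

lemma TT_swap1:
  "(\<Sum>(a,b,x,y)\<in>TT N. f a b x y) = (\<Sum>(a,b,x,y)\<in>TT N. f b a y x)"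
proof -
  define h where "h = (\<lambda>(a::nat,b::nat,x::nat,y::nat). (b,a,y,x))"
  have bij: "bij_betw h (TT N) (TT N)"
    by (rule bij_betw_byWitness[where f'=h]) (auto simp: h_def TT_def)
  have "(\<Sum>(a,b,x,y)\<in>TT N. f a b x y) = (\<Sum>v\<in>TT N. (\<lambda>(a,b,x,y). f a b x y) (h v))"
    by (rule sum.reindex_bij_betw[OF bij, symmetric])
  also have "\<dots> = (\<Sum>(a,b,x,y)\<in>TT N. f b a y x)"
    by (rule sum.cong) (auto simp: h_def)
  finally show ?thesis .
qed

lemma TT_swap2:
  "(\<Sum>(a,b,x,y)\<in>TT N. f a b x y) = (\<Sum>(a,b,x,y)\<in>TT N. f x y a b)"
proof -
  define h where "h = (\<lambda>(a::nat,b::nat,x::nat,y::nat). (x,y,a,b))"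
  have bij: "bij_betw h (TT N) (TT N)"
    by (rule bij_betw_byWitness[where f'=h]) (auto simp: h_def TT_def mult.commute)
  have "(\<Sum>(a,b,x,y)\<in>TT N. f a b x y) = (\<Sum>v\<in>TT N. (\<lambda>(a,b,x,y). f a b x y) (h v))"
    by (rule sum.reindex_bij_betw[OF bij, symmetric])
  also have "\<dots> = (\<Sum>(a,b,x,y)\<in>TT N. f x y a b)"
    by (rule sum.cong) (auto simp: h_def)
  finally show ?thesis .
qed

definition DD :: "nat \<Rightarrow> (nat \<times> nat) set" where
  "DD n = {(a,x). 0<a \<and> 0<x \<and> a*x = n}"

lemma DD_finite: "finite (DD n)"
proof -
  have "DD n \<subseteq> {..n} \<times> {..n}"
  proof
    fix v assume "v \<in> DD n"
    then obtain a x where v: "v = (a,x)" "0<a" "0<x" "a*x = n" by (auto simp: DD_def)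
    have "a \<le> a*x" "x \<le> a*x" using v by auto
    then show "v \<in> {..n} \<times> {..n}" using v by auto
  qed
  then show ?thesis by (rule finite_subset) auto
qed

lemma divsigma_DD: "int (divsigma i n) = (\<Sum>(a,x)\<in>DD n. int a ^ i)"
proof (cases "n = 0")
  case True
  have "infinite {d::nat. d dvd 0}" by simp
  moreover have "DD 0 = {}" by (auto simp: DD_def)
  ultimately show ?thesis using True by (simp add: divsigma_def)
next
  case False
  have bij: "bij_betw fst (DD n) {d. d dvd n}"
  proof (rule bij_betw_byWitness[where f'="\<lambda>d. (d, n div d)"])
    show "\<forall>v\<in>DD n. (fst v, n div fst v) = v" by (auto simp: DD_def)
    show "\<forall>d\<in>{d. d dvd n}. fst (d, n div d) = d" by simp
    show "fst ` DD n \<subseteq> {d. d dvd n}" by (auto simp: DD_def)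
    show "(\<lambda>d. (d, n div d)) ` {d. d dvd n} \<subseteq> DD n"
      using False by (auto simp: DD_def elim!: dvdE)
  qed
  have "int (divsigma i n) = (\<Sum>d\<in>{d. d dvd n}. int d ^ i)" by (simp add: divsigma_def)
  also have "\<dots> = (\<Sum>v\<in>DD n. int (fst v) ^ i)"
    by (rule sum.reindex_bij_betw[OF bij, symmetric])
  also have "\<dots> = (\<Sum>(a,x)\<in>DD n. int a ^ i)" by (simp add: case_prod_beta)
  finally show ?thesis .
qed

lemma TT_conv:
  "(\<Sum>(a,b,x,y)\<in>TT N. int a ^ i * int b ^ j)
   = (\<Sum>m\<le>N. int (divsigma i m) * int (divsigma j (N - m)))"
proof -
  define F where "F = (\<lambda>(a::nat,b::nat,x::nat,y::nat). int a ^ i * int b ^ j)"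
  define g where "g = (\<lambda>(a::nat,b::nat,x::nat,y::nat). a * x)"
  have "sum F (TT N) = (\<Sum>m\<le>N. sum F {v \<in> TT N. g v = m})"
    by (rule sum.group[symmetric, OF TT_finite]) (auto simp: g_def TT_def)
  also have "\<dots> = (\<Sum>m\<le>N. int (divsigma i m) * int (divsigma j (N - m)))"
  proof (rule sum.cong[OF refl])
    fix m assume m: "m \<in> {..N}"
    define h where "h = (\<lambda>((a::nat,x::nat),(b::nat,y::nat)). (a,b,x,y))"
    have inj: "inj_on h (DD m \<times> DD (N - m))" by (auto simp: h_def inj_on_def)
    have im: "{v \<in> TT N. g v = m} = h ` (DD m \<times> DD (N - m))"
    proof
      show "{v \<in> TT N. g v = m} \<subseteq> h ` (DD m \<times> DD (N - m))"
      proof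
        fix v assume "v \<in> {v \<in> TT N. g v = m}"
        then obtain a b x y where v: "v = (a,b,x,y)" "0<a" "0<b" "0<x" "0<y" "a*x+b*y = N" "a*x = m"
          by (auto simp: TT_def g_def)
        then have "((a,x),(b,y)) \<in> DD m \<times> DD (N - m)" by (auto simp: DD_def)
        then show "v \<in> h ` (DD m \<times> DD (N - m))" using v(1) by (force simp: h_def)
      qed
      show "h ` (DD m \<times> DD (N - m)) \<subseteq> {v \<in> TT N. g v = m}"
        using m by (auto simp: h_def DD_def TT_def g_def)
    qed
    have "sum F {v \<in> TT N. g v = m} = sum (F \<circ> h) (DD m \<times> DD (N - m))"
      unfolding im by (rule sum.reindex[OF inj])
    also have "\<dots> = (\<Sum>(a,x)\<in>DD m. \<Sum>(b,y)\<in>DD (N-m). int a ^ i * int b ^ j)"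
      by (simp add: sum.cartesian_product F_def h_def case_prod_beta)
    also have "\<dots> = (\<Sum>(a,x)\<in>DD m. int a ^ i) * (\<Sum>(b,y)\<in>DD (N-m). int b ^ j)"
      by (simp add: sum_product case_prod_beta)
    also have "\<dots> = int (divsigma i m) * int (divsigma j (N - m))"
      by (simp add: divsigma_DD)
    finally show "sum F {v \<in> TT N. g v = m} = int (divsigma i m) * int (divsigma j (N - m))" .
  qed
  finally show ?thesis by (simp add: F_def)
qed

lemma TT_bd1:
  assumes N: "N > 0"
  shows "(\<Sum>(a,b,x,y)\<in>{(a,b,x,y). (a,b,x,y) \<in> TT N \<and> a = b}. f x y)
       = (\<Sum>M\<in>{M. M dvd N}. \<Sum>x\<in>{1..<M}. f x (M - x))"
proof -
  define h where "h = (\<lambda>(M::nat,x::nat). (N div M, N div M, x, M - x))"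
  have fin: "finite {M. M dvd N}" using N by simp
  have inj: "inj_on h (Sigma {M. M dvd N} (\<lambda>M. {1..<M}))"
    by (auto simp: h_def inj_on_def)
  have im: "{(a,b,x,y). (a,b,x,y) \<in> TT N \<and> a = b} = h ` (Sigma {M. M dvd N} (\<lambda>M. {1..<M}))"
  proof
    show "{(a,b,x,y). (a,b,x,y) \<in> TT N \<and> a = b} \<subseteq> h ` (Sigma {M. M dvd N} (\<lambda>M. {1..<M}))"
    proof
      fix v assume "v \<in> {(a,b,x,y). (a,b,x,y) \<in> TT N \<and> a = b}"
      then obtain a x y where v: "v = (a,a,x,y)" "0<a" "0<x" "0<y" "a*x+a*y = N"
        by (auto simp: TT_def)
      have e: "N = a * (x+y)" using v by (simp add: algebra_simps)
      then have "(x+y) dvd N" by simp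
      moreover have "N div (x+y) = a" using e v by simp
      ultimately show "v \<in> h ` (Sigma {M. M dvd N} (\<lambda>M. {1..<M}))"
        using v by (auto simp: h_def image_iff intro!: bexI[where x="(x+y, x)"])
    qed
    show "h ` (Sigma {M. M dvd N} (\<lambda>M. {1..<M})) \<subseteq> {(a,b,x,y). (a,b,x,y) \<in> TT N \<and> a = b}"
    proof
      fix w assume "w \<in> h ` (Sigma {M. M dvd N} (\<lambda>M. {1..<M}))"
      then obtain M x where w: "w = h (M,x)" "M dvd N" "1 \<le> x" "x < M" by auto
      have "N div M > 0" using w N by (auto elim!: dvdE)
      moreover have "N div M * x + N div M * (M - x) = N"
        using w by (metis add_mult_distrib2 dvd_div_mult_self le_add_diff_inverse less_imp_le mult.commute)
      ultimately show "w \<in> {(a,b,x,y). (a,b,x,y) \<in> TT N \<and> a = b}"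
        using w by (auto simp: h_def TT_def)
    qed
  qed
  have "(\<Sum>(a,b,x,y)\<in>{(a,b,x,y). (a,b,x,y) \<in> TT N \<and> a = b}. f x y)
      = (\<Sum>v\<in>Sigma {M. M dvd N} (\<lambda>M. {1..<M}). (\<lambda>(a,b,x,y). f x y) (h v))"
    unfolding im by (rule sum.reindex[OF inj, unfolded comp_def])
  also have "\<dots> = (\<Sum>(M,x)\<in>Sigma {M. M dvd N} (\<lambda>M. {1..<M}). f x (M - x))"
    by (rule sum.cong) (auto simp: h_def)
  also have "\<dots> = (\<Sum>M\<in>{M. M dvd N}. \<Sum>x\<in>{1..<M}. f x (M - x))"
    by (rule sum.Sigma[symmetric]) (use fin in auto)
  finally show ?thesis .
qed

lemma TT_bd2:
  fixes f :: "nat \<Rightarrow> int"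
  assumes N: "N > 0"
  shows "(\<Sum>(a,b,x,y)\<in>{(a,b,x,y). (a,b,x,y) \<in> TT N \<and> x = y}. f x)
       = (\<Sum>d\<in>{d. d dvd N}. (int (N div d) - 1) * f d)"
proof -
  define h where "h = (\<lambda>(d::nat,a::nat). (a, N div d - a, d, d))"
  have fin: "finite {d. d dvd N}" using N by simp
  have inj: "inj_on h (Sigma {d. d dvd N} (\<lambda>d. {1..<N div d}))"
    by (auto simp: h_def inj_on_def)
  have im: "{(a,b,x,y). (a,b,x,y) \<in> TT N \<and> x = y} = h ` (Sigma {d. d dvd N} (\<lambda>d. {1..<N div d}))"
  proof
    show "{(a,b,x,y). (a,b,x,y) \<in> TT N \<and> x = y} \<subseteq> h ` (Sigma {d. d dvd N} (\<lambda>d. {1..<N div d}))"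
    proof
      fix v assume "v \<in> {(a,b,x,y). (a,b,x,y) \<in> TT N \<and> x = y}"
      then obtain a b x where v: "v = (a,b,x,x)" "0<a" "0<b" "0<x" "a*x+b*x = N"
        by (auto simp: TT_def)
      have e: "N = x * (a+b)" using v by (simp add: algebra_simps)
      then have "x dvd N" by simp
      moreover have "N div x = a + b" using e v by simp
      ultimately show "v \<in> h ` (Sigma {d. d dvd N} (\<lambda>d. {1..<N div d}))"
        using v by (auto simp: h_def image_iff intro!: bexI[where x="(x, a)"])
    qed
    show "h ` (Sigma {d. d dvd N} (\<lambda>d. {1..<N div d})) \<subseteq> {(a,b,x,y). (a,b,x,y) \<in> TT N \<and> x = y}"
    proof
      fix w assume "w \<in> h ` (Sigma {d. d dvd N} (\<lambda>d. {1..<N div d}))"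
      then obtain d a where w: "w = h (d,a)" "d dvd N" "1 \<le> a" "a < N div d" by auto
      have "d > 0" using w N by (auto elim!: dvdE)
      moreover have "a * d + (N div d - a) * d = N"
        using w by (metis add_mult_distrib dvd_div_mult_self le_add_diff_inverse less_imp_le)
      ultimately show "w \<in> {(a,b,x,y). (a,b,x,y) \<in> TT N \<and> x = y}"
        using w by (auto simp: h_def TT_def)
    qed
  qed
  have "(\<Sum>(a,b,x,y)\<in>{(a,b,x,y). (a,b,x,y) \<in> TT N \<and> x = y}. f x)
      = (\<Sum>v\<in>Sigma {d. d dvd N} (\<lambda>d. {1..<N div d}). (\<lambda>(a,b,x,y). f x) (h v))"
    unfolding im by (rule sum.reindex[OF inj, unfolded comp_def])
  also have "\<dots> = (\<Sum>(d,a)\<in>Sigma {d. d dvd N} (\<lambda>d. {1..<N div d}). f d)"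
    by (rule sum.cong) (auto simp: h_def)
  also have "\<dots> = (\<Sum>d\<in>{d. d dvd N}. \<Sum>a\<in>{1..<N div d}. f d)"
    by (rule sum.Sigma[symmetric]) (use fin in auto)
  also have "\<dots> = (\<Sum>d\<in>{d. d dvd N}. (int (N div d) - 1) * f d)"
  proof (rule sum.cong[OF refl])
    fix d assume "d \<in> {d. d dvd N}"
    then obtain k where k: "N = d * k" by auto
    then have "N div d \<noteq> 0" using N by auto
    then show "(\<Sum>a\<in>{1..<N div d}. f d) = (int (N div d) - 1) * f d"
      by (cases "N div d") (auto simp: of_nat_diff)
  qed
  finally show ?thesis .
qed

definition P1 :: "int \<Rightarrow> int \<Rightarrow> int" where "P1 u v = u ^ 2 + u * v + v ^ 2"
definition P2 :: "int \<Rightarrow> int \<Rightarrow> int" where "P2 u v = (P1 u v)^2"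
definition P3 :: "int \<Rightarrow> int \<Rightarrow> int" where "P3 u v = (P1 u v)^3"
definition PA :: "int \<Rightarrow> int \<Rightarrow> int" where "PA u v = u^2 * v^2 * (u+v)^2"

lemma sum_P1:
  fixes m :: int
  shows "6 * (\<Sum>x<K. P1 (int x) (m - int x)) = (let k = int K in 2*k^3 - 3*k^2*m - 3*k^2 + 6*k*m^2 + 3*k*m + k)"
proof (induction K)
  case 0 then show ?case by simp
next
  case (Suc K)
  have "6 * (\<Sum>x<Suc K. P1 (int x) (m - int x)) = 6 * (\<Sum>x<K. P1 (int x) (m - int x)) + 6 * P1 (int K) (m - int K)"
    by (simp add: algebra_simps)
  also have "\<dots> = (let k = int K in 2*k^3 - 3*k^2*m - 3*k^2 + 6*k*m^2 + 3*k*m + k) + 6 * P1 (int K) (m - int K)"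
    using Suc.IH by simp
  also have "\<dots> = (let k = int (Suc K) in 2*k^3 - 3*k^2*m - 3*k^2 + 6*k*m^2 + 3*k*m + k)"
    by (simp add: Let_def P1_def P1_def) algebra
  finally show ?case .
qed

lemma sum_P2:
  fixes m :: int
  shows "30 * (\<Sum>x<K. P2 (int x) (m - int x)) = (let k = int K in 6*k^5 - 15*k^4*m - 15*k^4 + 30*k^3*m^2 + 30*k^3*m + 10*k^3 - 30*k^2*m^3 - 45*k^2*m^2 - 15*k^2*m + 30*k*m^4 + 30*k*m^3 + 15*k*m^2 - k)"
proof (induction K)
  case 0 then show ?case by simp
next
  case (Suc K)
  have "30 * (\<Sum>x<Suc K. P2 (int x) (m - int x)) = 30 * (\<Sum>x<K. P2 (int x) (m - int x)) + 30 * P2 (int K) (m - int K)"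
    by (simp add: algebra_simps)
  also have "\<dots> = (let k = int K in 6*k^5 - 15*k^4*m - 15*k^4 + 30*k^3*m^2 + 30*k^3*m + 10*k^3 - 30*k^2*m^3 - 45*k^2*m^2 - 15*k^2*m + 30*k*m^4 + 30*k*m^3 + 15*k*m^2 - k) + 30 * P2 (int K) (m - int K)"
    using Suc.IH by simp
  also have "\<dots> = (let k = int (Suc K) in 6*k^5 - 15*k^4*m - 15*k^4 + 30*k^3*m^2 + 30*k^3*m + 10*k^3 - 30*k^2*m^3 - 45*k^2*m^2 - 15*k^2*m + 30*k*m^4 + 30*k*m^3 + 15*k*m^2 - k)"
    by (simp add: Let_def P2_def P1_def) algebra
  finally show ?case .
qed

lemma sum_P3:
  fixes m :: int
  shows "420 * (\<Sum>x<K. P3 (int x) (m - int x)) = (let k = int K in 60*k^7 - 210*k^6*m - 210*k^6 + 504*k^5*m^2 + 630*k^5*m + 210*k^5 - 735*k^4*m^3 - 1260*k^4*m^2 - 525*k^4*m + 840*k^3*m^4 + 1470*k^3*m^3 + 840*k^3*m^2 - 70*k^3 - 630*k^2*m^5 - 1260*k^2*m^4 - 735*k^2*m^3 + 105*k^2*m + 420*k*m^6 + 630*k*m^5 + 420*k*m^4 - 84*k*m^2 + 10*k)"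
proof (induction K)
  case 0 then show ?case by simp
next
  case (Suc K)
  have "420 * (\<Sum>x<Suc K. P3 (int x) (m - int x)) = 420 * (\<Sum>x<K. P3 (int x) (m - int x)) + 420 * P3 (int K) (m - int K)"
    by (simp add: algebra_simps)
  also have "\<dots> = (let k = int K in 60*k^7 - 210*k^6*m - 210*k^6 + 504*k^5*m^2 + 630*k^5*m + 210*k^5 - 735*k^4*m^3 - 1260*k^4*m^2 - 525*k^4*m + 840*k^3*m^4 + 1470*k^3*m^3 + 840*k^3*m^2 - 70*k^3 - 630*k^2*m^5 - 1260*k^2*m^4 - 735*k^2*m^3 + 105*k^2*m + 420*k*m^6 + 630*k*m^5 + 420*k*m^4 - 84*k*m^2 + 10*k) + 420 * P3 (int K) (m - int K)"
    using Suc.IH by simp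
  also have "\<dots> = (let k = int (Suc K) in 60*k^7 - 210*k^6*m - 210*k^6 + 504*k^5*m^2 + 630*k^5*m + 210*k^5 - 735*k^4*m^3 - 1260*k^4*m^2 - 525*k^4*m + 840*k^3*m^4 + 1470*k^3*m^3 + 840*k^3*m^2 - 70*k^3 - 630*k^2*m^5 - 1260*k^2*m^4 - 735*k^2*m^3 + 105*k^2*m + 420*k*m^6 + 630*k*m^5 + 420*k*m^4 - 84*k*m^2 + 10*k)"
    by (simp add: Let_def P3_def P1_def) algebra
  finally show ?case .
qed

lemma sum_PA:
  fixes m :: int
  shows "30 * (\<Sum>x<K. PA (int x) (m - int x)) = (let k = int K in 6*k^5*m^2 - 15*k^4*m^3 - 15*k^4*m^2 + 10*k^3*m^4 + 30*k^3*m^3 + 10*k^3*m^2 - 15*k^2*m^4 - 15*k^2*m^3 + 5*k*m^4 - k*m^2)"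
proof (induction K)
  case 0 then show ?case by simp
next
  case (Suc K)
  have "30 * (\<Sum>x<Suc K. PA (int x) (m - int x)) = 30 * (\<Sum>x<K. PA (int x) (m - int x)) + 30 * PA (int K) (m - int K)"
    by (simp add: algebra_simps)
  also have "\<dots> = (let k = int K in 6*k^5*m^2 - 15*k^4*m^3 - 15*k^4*m^2 + 10*k^3*m^4 + 30*k^3*m^3 + 10*k^3*m^2 - 15*k^2*m^4 - 15*k^2*m^3 + 5*k*m^4 - k*m^2) + 30 * PA (int K) (m - int K)"
    using Suc.IH by simp
  also have "\<dots> = (let k = int (Suc K) in 6*k^5*m^2 - 15*k^4*m^3 - 15*k^4*m^2 + 10*k^3*m^4 + 30*k^3*m^3 + 10*k^3*m^2 - 15*k^2*m^4 - 15*k^2*m^3 + 5*k*m^4 - k*m^2)"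
    by (simp add: Let_def PA_def P1_def) algebra
  finally show ?case .
qed

lemma TT_main:
  fixes P :: "int \<Rightarrow> int \<Rightarrow> int"
  assumes inv: "\<And>u v. P (u - v) v = P u (v - u)" and N: "N > 0"
  shows "(\<Sum>(a,b,x,y)\<in>TT N. P (int x) (int y) - P (int x) (int y - int x))
       = (\<Sum>M\<in>{M. M dvd N}. \<Sum>x\<in>{1..<M}. P (int x) (int M - int x))
         - (\<Sum>d\<in>{d. d dvd N}. (int (N div d) - 1) * P (int d) 0)"
proof -
  have "(\<Sum>(a,b,x,y)\<in>TT N. P (int x) (int y) - P (int x) (int y - int x))
      = (\<Sum>(a,b,x,y)\<in>TT N. P (int x) (int y)) - (\<Sum>(a,b,x,y)\<in>TT N. P (int x) (int y - int x))"
    by (subst sum_subtractf[symmetric]) (rule sum.cong, auto split: prod.splits)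
  also have "\<dots> = (\<Sum>(a,b,x,y)\<in>{(a,b,x,y). (a,b,x,y) \<in> TT N \<and> a = b}. P (int x) (int y))
         - (\<Sum>(a,b,x,y)\<in>{(a,b,x,y). (a,b,x,y) \<in> TT N \<and> x = y}. P (int x) 0)"
    using TT_key[of P N, OF inv] by simp
  also have "(\<Sum>(a,b,x,y)\<in>{(a,b,x,y). (a,b,x,y) \<in> TT N \<and> a = b}. P (int x) (int y))
      = (\<Sum>M\<in>{M. M dvd N}. \<Sum>x\<in>{1..<M}. P (int x) (int (M - x)))"
    using TT_bd1[OF N, of "\<lambda>x y. P (int x) (int y)"] by simp
  also have "\<dots> = (\<Sum>M\<in>{M. M dvd N}. \<Sum>x\<in>{1..<M}. P (int x) (int M - int x))"
    by (intro sum.cong refl) (auto simp: of_nat_diff)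
  also have "(\<Sum>(a,b,x,y)\<in>{(a,b,x,y). (a,b,x,y) \<in> TT N \<and> x = y}. P (int x) 0)
      = (\<Sum>d\<in>{d. d dvd N}. (int (N div d) - 1) * P (int d) 0)"
    using TT_bd2[OF N, of "\<lambda>x. P (int x) 0"] by simp
  finally show ?thesis .
qed

definition conv :: "nat \<Rightarrow> nat \<Rightarrow> nat \<Rightarrow> int" where
  "conv i j N = (\<Sum>m\<le>N. int (divsigma i m) * int (divsigma j (N - m)))"

lemma TT_xy_conv: "(\<Sum>(a,b,x,y)\<in>TT N. int x ^ i * int y ^ j) = conv i j N"
  using TT_swap2[of "\<lambda>a b x y. int a ^ i * int b ^ j" N] TT_conv[of i j N]
  by (simp add: conv_def)

lemma TT_xy_sym: "(\<Sum>(a,b,x,y)\<in>TT N. int x ^ i * int y ^ j) = (\<Sum>(a,b,x,y)\<in>TT N. int x ^ j * int y ^ i)"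
  using TT_swap1[of "\<lambda>a b x y. int x ^ i * int y ^ j" N] by (simp add: mult.commute)

lemma sig_int: "int (divsigma k N) = (\<Sum>d\<in>{d. d dvd N}. int d ^ k)"
  by (simp add: divsigma_def)

lemma bd2_pow:
  assumes N: "N > 0"
  shows "(\<Sum>d\<in>{d. d dvd N}. (int (N div d) - 1) * (c * int d ^ Suc k))
       = c * (int N * int (divsigma k N) - int (divsigma (Suc k) N))"
proof -
  have "(\<Sum>d\<in>{d. d dvd N}. (int (N div d) - 1) * (c * int d ^ Suc k))
      = (\<Sum>d\<in>{d. d dvd N}. c * (int N * int d ^ k - int d ^ Suc k))"
  proof (rule sum.cong[OF refl])
    fix d assume "d \<in> {d. d dvd N}"
    then have "int (N div d) * int d = int N" by (metis dvd_div_mult_self mem_Collect_eq of_nat_mult)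
    then show "(int (N div d) - 1) * (c * int d ^ Suc k) = c * (int N * int d ^ k - int d ^ Suc k)"
      by (simp add: algebra_simps)
  qed
  also have "\<dots> = c * (int N * int (divsigma k N) - int (divsigma (Suc k) N))"
    by (simp add: sig_int sum_distrib_left sum_subtractf algebra_simps)
  finally show ?thesis .
qed

lemma split0:
  fixes M :: nat
  assumes "M > 0"
  shows "(\<Sum>x<M. f x) = f 0 + (\<Sum>x\<in>{1..<M}. f x)"
proof -
  have "{..<M} = insert 0 {1..<M}"
  proof (rule set_eqI)
    fix x :: nat show "x \<in> {..<M} \<longleftrightarrow> x \<in> insert 0 {1..<M}" using assms by (cases x) auto
  qed
  then show ?thesis by simp
qed

lemma conv11:
  assumes N: "N > 0"
  shows "12 * conv 1 1 N = 5 * int (divsigma 3 N) + int (divsigma 1 N) - 6 * int N * int (divsigma 1 N)"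
proof -
  have inv: "\<And>u v. P1 (u - v) v = P1 u (v - u)" by (simp add: P1_def algebra_simps power2_eq_square)
  have "(\<Sum>(a,b,x,y)\<in>TT N. P1 (int x) (int y) - P1 (int x) (int y - int x))
      = (\<Sum>(a,b,x,y)\<in>TT N. 2 * (int x ^ 1 * int y ^ 1))"
    by (rule sum.cong) (auto simp: P1_def algebra_simps power2_eq_square)
  also have "\<dots> = 2 * conv 1 1 N"
    using TT_xy_conv[where N=N and i=1 and j=1] by (simp add: sum_distrib_left[symmetric] case_prod_beta)
  finally have L: "(\<Sum>(a,b,x,y)\<in>TT N. P1 (int x) (int y) - P1 (int x) (int y - int x)) = 2 * conv 1 1 N" .
  have B: "6 * (\<Sum>M\<in>{M. M dvd N}. \<Sum>x\<in>{1..<M}. P1 (int x) (int M - int x))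
         = 5 * int (divsigma 3 N) - 6 * int (divsigma 2 N) + int (divsigma 1 N)"
  proof -
    have "6 * (\<Sum>M\<in>{M. M dvd N}. \<Sum>x\<in>{1..<M}. P1 (int x) (int M - int x))
       = (\<Sum>M\<in>{M. M dvd N}. 5 * int M ^ 3 - 6 * int M ^ 2 + int M)"
      unfolding sum_distrib_left[of _ _ "{M. M dvd N}"]
    proof (rule sum.cong[OF refl])
      fix M assume "M \<in> {M. M dvd N}"
      then have M: "M > 0" using N by (auto intro: Nat.gr0I)
      show "6 * (\<Sum>x\<in>{1..<M}. P1 (int x) (int M - int x)) = 5 * int M ^ 3 - 6 * int M ^ 2 + int M"
        using sum_P1[where K=M and m="int M"] split0[OF M, of "\<lambda>x. P1 (int x) (int M - int x)"]
        by (simp add: Let_def P1_def algebra_simps power2_eq_square power3_eq_cube)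
    qed
    also have "\<dots> = 5 * int (divsigma 3 N) - 6 * int (divsigma 2 N) + int (divsigma 1 N)"
      by (simp add: sig_int sum.distrib sum_subtractf sum_distrib_left)
    finally show ?thesis .
  qed
  have C: "(\<Sum>d\<in>{d. d dvd N}. (int (N div d) - 1) * P1 (int d) 0) = int N * int (divsigma 1 N) - int (divsigma 2 N)"
    using bd2_pow[OF N, of 1 1] by (simp add: P1_def numeral_2_eq_2)
  show ?thesis using TT_main[of P1 N, OF inv N] L B C by linarith
qed

lemma conv13:
  assumes N: "N > 0"
  shows "240 * conv 1 3 N = 21 * int (divsigma 5 N) + 10 * int (divsigma 3 N) - 30 * int N * int (divsigma 3 N) - int (divsigma 1 N)"
proof -
  have inv: "\<And>u v. P2 (u - v) v = P2 u (v - u)" unfolding P2_def P1_def by algebra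
  have pt: "\<And>u v. P2 u v - P2 u (v - u) = 4 * (u ^ 1 * v ^ 3) + 4 * (u ^ 3 * v ^ 1)" unfolding P2_def P1_def by algebra
  have "(\<Sum>(a,b,x,y)\<in>TT N. P2 (int x) (int y) - P2 (int x) (int y - int x))
      = (\<Sum>(a,b,x,y)\<in>TT N. 4 * (int x ^ 1 * int y ^ 3) + 4 * (int x ^ 3 * int y ^ 1))"
    by (rule sum.cong) (auto simp: pt)
  also have "\<dots> = 8 * conv 1 3 N"
    using TT_xy_conv[where N=N and i=1 and j=3] TT_xy_sym[where N=N and i=1 and j=3]
    by (simp add: sum.distrib sum_distrib_left[symmetric] case_prod_beta)
  finally have L: "(\<Sum>(a,b,x,y)\<in>TT N. P2 (int x) (int y) - P2 (int x) (int y - int x)) = 8 * conv 1 3 N" .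
  have B: "30 * (\<Sum>M\<in>{M. M dvd N}. \<Sum>x\<in>{1..<M}. P2 (int x) (int M - int x)) = 21 * int (divsigma 5 N) - 30 * int (divsigma 4 N) + 10 * int (divsigma 3 N) - int (divsigma 1 N)"
  proof -
    have "30 * (\<Sum>M\<in>{M. M dvd N}. \<Sum>x\<in>{1..<M}. P2 (int x) (int M - int x))
       = (\<Sum>M\<in>{M. M dvd N}. 21 * int M^5 - 30 * int M^4 + 10 * int M^3 - int M)"
      unfolding sum_distrib_left[of _ _ "{M. M dvd N}"]
    proof (rule sum.cong[OF refl])
      fix M assume "M \<in> {M. M dvd N}"
      then have M: "M > 0" using N by (auto intro: Nat.gr0I)
      have e: "30 * (\<Sum>x<M. P2 (int x) (int M - int x)) = 30 * P2 0 (int M) + 30 * (\<Sum>x\<in>{1..<M}. P2 (int x) (int M - int x))"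
        using split0[OF M, of "\<lambda>x. P2 (int x) (int M - int x)"] by (simp add: algebra_simps)
      have e1: "30 * (\<Sum>x\<in>{1..<M}. P2 (int x) (int M - int x)) = 30 * (\<Sum>x<M. P2 (int x) (int M - int x)) - 30 * P2 0 (int M)"
        using e by linarith
      have e2: "30 * (\<Sum>x<M. P2 (int x) (int M - int x)) - 30 * P2 0 (int M) = 21 * int M^5 - 30 * int M^4 + 10 * int M^3 - int M"
        unfolding sum_P2[where K=M and m="int M"] unfolding Let_def P2_def P1_def by (simp add: eval_nat_numeral algebra_simps)
      show "30 * (\<Sum>x\<in>{1..<M}. P2 (int x) (int M - int x)) = 21 * int M^5 - 30 * int M^4 + 10 * int M^3 - int M"
        using e1 e2 by simp
    qed
    also have "\<dots> = 21 * int (divsigma 5 N) - 30 * int (divsigma 4 N) + 10 * int (divsigma 3 N) - int (divsigma 1 N)"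
      by (simp add: sig_int sum.distrib sum_subtractf sum_distrib_left)
    finally show ?thesis .
  qed
  have C: "(\<Sum>d\<in>{d. d dvd N}. (int (N div d) - 1) * P2 (int d) 0) = int N * int (divsigma 3 N) - int (divsigma 4 N)"
    proof -
    have p0: "\<And>d. P2 d 0 = 1 * d ^ Suc 3" by (simp add: P2_def P1_def eval_nat_numeral algebra_simps)
    show ?thesis using bd2_pow[OF N, of 1 3] by (simp add: p0)
  qed
  show ?thesis using TT_main[of P2 N, OF inv N] L B C  by linarith
qed

lemma conv33:
  assumes N: "N > 0"
  shows "120 * conv 3 3 N = int (divsigma 7 N) - int (divsigma 3 N)"
proof -
  have inv: "\<And>u v. PA (u - v) v = PA u (v - u)" unfolding PA_def P1_def by algebra
  have pt: "\<And>u v. PA u v - PA u (v - u) = 4 * (u ^ 3 * v ^ 3)" unfolding PA_def P1_def by algebra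
  have "(\<Sum>(a,b,x,y)\<in>TT N. PA (int x) (int y) - PA (int x) (int y - int x))
      = (\<Sum>(a,b,x,y)\<in>TT N. 4 * (int x ^ 3 * int y ^ 3))"
    by (rule sum.cong) (auto simp: pt)
  also have "\<dots> = 4 * conv 3 3 N"
    using TT_xy_conv[where N=N and i=3 and j=3]
    by (simp add: sum_distrib_left[symmetric] case_prod_beta)
  finally have L: "(\<Sum>(a,b,x,y)\<in>TT N. PA (int x) (int y) - PA (int x) (int y - int x)) = 4 * conv 3 3 N" .
  have B: "30 * (\<Sum>M\<in>{M. M dvd N}. \<Sum>x\<in>{1..<M}. PA (int x) (int M - int x)) = int (divsigma 7 N) - int (divsigma 3 N)"
  proof -
    have "30 * (\<Sum>M\<in>{M. M dvd N}. \<Sum>x\<in>{1..<M}. PA (int x) (int M - int x))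
       = (\<Sum>M\<in>{M. M dvd N}. int M^7 - int M^3)"
      unfolding sum_distrib_left[of _ _ "{M. M dvd N}"]
    proof (rule sum.cong[OF refl])
      fix M assume "M \<in> {M. M dvd N}"
      then have M: "M > 0" using N by (auto intro: Nat.gr0I)
      have e: "30 * (\<Sum>x<M. PA (int x) (int M - int x)) = 30 * PA 0 (int M) + 30 * (\<Sum>x\<in>{1..<M}. PA (int x) (int M - int x))"
        using split0[OF M, of "\<lambda>x. PA (int x) (int M - int x)"] by (simp add: algebra_simps)
      have e1: "30 * (\<Sum>x\<in>{1..<M}. PA (int x) (int M - int x)) = 30 * (\<Sum>x<M. PA (int x) (int M - int x)) - 30 * PA 0 (int M)"
        using e by linarith
      have e2: "30 * (\<Sum>x<M. PA (int x) (int M - int x)) - 30 * PA 0 (int M) = int M^7 - int M^3"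
        unfolding sum_PA[where K=M and m="int M"] unfolding Let_def PA_def P1_def by (simp add: eval_nat_numeral algebra_simps)
      show "30 * (\<Sum>x\<in>{1..<M}. PA (int x) (int M - int x)) = int M^7 - int M^3"
        using e1 e2 by simp
    qed
    also have "\<dots> = int (divsigma 7 N) - int (divsigma 3 N)"
      by (simp add: sig_int sum.distrib sum_subtractf sum_distrib_left)
    finally show ?thesis .
  qed
  have C: "(\<Sum>d\<in>{d. d dvd N}. (int (N div d) - 1) * PA (int d) 0) = 0"
    by (simp add: PA_def)
  show ?thesis using TT_main[of PA N, OF inv N] L B C  by linarith
qed

lemma conv15:
  assumes N: "N > 0"
  shows "504 * conv 1 5 N = 20 * int (divsigma 7 N) + 21 * int (divsigma 5 N) + int (divsigma 1 N) - 42 * int N * int (divsigma 5 N)"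
proof -
  have inv: "\<And>u v. P3 (u - v) v = P3 u (v - u)" unfolding P3_def P1_def by algebra
  have pt: "\<And>u v. P3 u v - P3 u (v - u) = 6 * (u ^ 1 * v ^ 5) + 6 * (u ^ 5 * v ^ 1) + 14 * (u ^ 3 * v ^ 3)" unfolding P3_def P1_def by algebra
  have "(\<Sum>(a,b,x,y)\<in>TT N. P3 (int x) (int y) - P3 (int x) (int y - int x))
      = (\<Sum>(a,b,x,y)\<in>TT N. 6 * (int x ^ 1 * int y ^ 5) + 6 * (int x ^ 5 * int y ^ 1) + 14 * (int x ^ 3 * int y ^ 3))"
    by (rule sum.cong) (auto simp: pt)
  also have "\<dots> = 12 * conv 1 5 N + 14 * conv 3 3 N"
    using TT_xy_conv[where N=N and i=1 and j=5] TT_xy_sym[where N=N and i=1 and j=5]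
      TT_xy_conv[where N=N and i=3 and j=3]
    by (simp add: sum.distrib sum_distrib_left[symmetric] case_prod_beta)
  finally have L: "(\<Sum>(a,b,x,y)\<in>TT N. P3 (int x) (int y) - P3 (int x) (int y - int x)) = 12 * conv 1 5 N + 14 * conv 3 3 N" .
  have B: "420 * (\<Sum>M\<in>{M. M dvd N}. \<Sum>x\<in>{1..<M}. P3 (int x) (int M - int x)) = 249 * int (divsigma 7 N) - 420 * int (divsigma 6 N) + 210 * int (divsigma 5 N) - 49 * int (divsigma 3 N) + 10 * int (divsigma 1 N)"
  proof -
    have "420 * (\<Sum>M\<in>{M. M dvd N}. \<Sum>x\<in>{1..<M}. P3 (int x) (int M - int x))
       = (\<Sum>M\<in>{M. M dvd N}. 249 * int M^7 - 420 * int M^6 + 210 * int M^5 - 49 * int M^3 + 10 * int M)"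
      unfolding sum_distrib_left[of _ _ "{M. M dvd N}"]
    proof (rule sum.cong[OF refl])
      fix M assume "M \<in> {M. M dvd N}"
      then have M: "M > 0" using N by (auto intro: Nat.gr0I)
      have e: "420 * (\<Sum>x<M. P3 (int x) (int M - int x)) = 420 * P3 0 (int M) + 420 * (\<Sum>x\<in>{1..<M}. P3 (int x) (int M - int x))"
        using split0[OF M, of "\<lambda>x. P3 (int x) (int M - int x)"] by (simp add: algebra_simps)
      have e1: "420 * (\<Sum>x\<in>{1..<M}. P3 (int x) (int M - int x)) = 420 * (\<Sum>x<M. P3 (int x) (int M - int x)) - 420 * P3 0 (int M)"
        using e by linarith
      have e2: "420 * (\<Sum>x<M. P3 (int x) (int M - int x)) - 420 * P3 0 (int M) = 249 * int M^7 - 420 * int M^6 + 210 * int M^5 - 49 * int M^3 + 10 * int M"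
        unfolding sum_P3[where K=M and m="int M"] unfolding Let_def P3_def P1_def by (simp add: eval_nat_numeral algebra_simps)
      show "420 * (\<Sum>x\<in>{1..<M}. P3 (int x) (int M - int x)) = 249 * int M^7 - 420 * int M^6 + 210 * int M^5 - 49 * int M^3 + 10 * int M"
        using e1 e2 by simp
    qed
    also have "\<dots> = 249 * int (divsigma 7 N) - 420 * int (divsigma 6 N) + 210 * int (divsigma 5 N) - 49 * int (divsigma 3 N) + 10 * int (divsigma 1 N)"
      by (simp add: sig_int sum.distrib sum_subtractf sum_distrib_left)
    finally show ?thesis .
  qed
  have C: "(\<Sum>d\<in>{d. d dvd N}. (int (N div d) - 1) * P3 (int d) 0) = int N * int (divsigma 5 N) - int (divsigma 6 N)"
    proof -
    have p0: "\<And>d. P3 d 0 = 1 * d ^ Suc 5" by (simp add: P3_def P1_def eval_nat_numeral algebra_simps)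
    show ?thesis using bd2_pow[OF N, of 1 5] by (simp add: p0)
  qed
  show ?thesis using TT_main[of P3 N, OF inv N] L B C conv33[OF N] by linarith
qed

definition gs :: "nat \<Rightarrow> complex fps" where
  "gs k = Abs_fps (\<lambda>n. of_nat (divsigma k n))"

definition th :: "complex fps \<Rightarrow> complex fps" where
  "th f = Abs_fps (\<lambda>n. of_nat n * f $ n)"

definition PP :: "complex fps" where "PP = 1 - 24 * gs 1"
definition QQ :: "complex fps" where "QQ = 1 + 240 * gs 3"
definition RR :: "complex fps" where "RR = 1 - 504 * gs 5"

lemma divsigma0 [simp]: "divsigma k 0 = 0"
proof -
  have "infinite {d::nat. d dvd 0}" by simp
  then show ?thesis by (simp add: divsigma_def)
qed

lemma gs_nth [simp]: "gs k $ n = of_nat (divsigma k n)"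
  by (simp add: gs_def)

lemma th_nth [simp]: "th f $ n = of_nat n * f $ n"
  by (simp add: th_def)

lemma gg_nth: "(gs i * gs j) $ n = of_int (conv i j n)"
  by (simp add: fps_mult_nth conv_def atLeast0AtMost)

lemma conv0: "conv i j 0 = 0"
  by (simp add: conv_def)

lemma R1: "12 * th PP = PP * PP - QQ"
proof (rule fps_ext)
  fix n
  have e: "PP * PP - QQ = 576 * (gs 1 * gs 1) - 48 * gs 1 - 240 * gs 3"
    by (simp add: PP_def QQ_def algebra_simps)
  show "(12 * th PP) $ n = (PP * PP - QQ) $ n"
  proof (cases "n = 0")
    case True then show ?thesis
      by (simp add: PP_def QQ_def RR_def fps_mult_nth numeral_fps_const)
  next
    case False then have N: "n > 0" by simp
    have E: "12 * int n * (- 24 * int (divsigma 1 n)) = 576 * conv 1 1 n - 48 * int (divsigma 1 n) - 240 * int (divsigma 3 n)"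
      using conv11[OF N] by (simp add: algebra_simps)
    have Ec: "of_int (12 * int n * (- 24 * int (divsigma 1 n))) = (of_int (576 * conv 1 1 n - 48 * int (divsigma 1 n) - 240 * int (divsigma 3 n)) :: complex)"
      using E by simp
    show ?thesis unfolding e using Ec False by (simp add: gg_nth numeral_fps_const PP_def)
  qed
qed

lemma R2: "3 * th QQ = PP * QQ - RR"
proof (rule fps_ext)
  fix n
  have e: "PP * QQ - RR = 240 * gs 3 - 24 * gs 1 - 5760 * (gs 1 * gs 3) + 504 * gs 5"
    by (simp add: PP_def QQ_def RR_def algebra_simps)
  show "(3 * th QQ) $ n = (PP * QQ - RR) $ n"
  proof (cases "n = 0")
    case True then show ?thesis
      by (simp add: PP_def QQ_def RR_def fps_mult_nth numeral_fps_const)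
  next
    case False then have N: "n > 0" by simp
    have E: "3 * int n * (240 * int (divsigma 3 n)) = 240 * int (divsigma 3 n) - 24 * int (divsigma 1 n) - 5760 * conv 1 3 n + 504 * int (divsigma 5 n)"
      using conv13[OF N] by (simp add: algebra_simps)
    have Ec: "of_int (3 * int n * (240 * int (divsigma 3 n))) = (of_int (240 * int (divsigma 3 n) - 24 * int (divsigma 1 n) - 5760 * conv 1 3 n + 504 * int (divsigma 5 n)) :: complex)"
      using E by simp
    show ?thesis unfolding e using Ec False by (simp add: gg_nth numeral_fps_const QQ_def)
  qed
qed

lemma R3: "2 * th RR = PP * RR - QQ * QQ"
proof (rule fps_ext)
  fix n
  have e: "PP * RR - QQ * QQ = 12096 * (gs 1 * gs 5) - 57600 * (gs 3 * gs 3) - 24 * gs 1 - 504 * gs 5 - 480 * gs 3"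
    by (simp add: PP_def QQ_def RR_def algebra_simps)
  show "(2 * th RR) $ n = (PP * RR - QQ * QQ) $ n"
  proof (cases "n = 0")
    case True then show ?thesis
      by (simp add: PP_def QQ_def RR_def fps_mult_nth numeral_fps_const)
  next
    case False then have N: "n > 0" by simp
    have E: "2 * int n * (- 504 * int (divsigma 5 n)) = 12096 * conv 1 5 n - 57600 * conv 3 3 n - 24 * int (divsigma 1 n) - 504 * int (divsigma 5 n) - 480 * int (divsigma 3 n)"
      using conv15[OF N] conv33[OF N] by (simp add: algebra_simps)
    have Ec: "of_int (2 * int n * (- 504 * int (divsigma 5 n))) = (of_int (12096 * conv 1 5 n - 57600 * conv 3 3 n - 24 * int (divsigma 1 n) - 504 * int (divsigma 5 n) - 480 * int (divsigma 3 n)) :: complex)"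
      using E by simp
    show ?thesis unfolding e using Ec False by (simp add: gg_nth numeral_fps_const RR_def)
  qed
qed

lemma conv_radius_compare:
  fixes f g :: "nat \<Rightarrow> complex"
  assumes le: "\<And>n. norm (f n) \<le> norm (g n)"
  shows "conv_radius g \<le> conv_radius f"
proof (rule conv_radius_geI_ex')
  fix r :: real assume r: "0 < r" "ereal r < conv_radius g"
  have nr: "norm (complex_of_real r) = r" using r(1) by simp
  have a: "ereal (norm (complex_of_real r)) < conv_radius g" unfolding nr by (rule r(2))
  have s: "summable (\<lambda>n. norm (g n * of_real r ^ n))"
    by (rule abs_summable_in_conv_radius[OF a])
  have c: "norm (norm (f n * of_real r ^ n)) \<le> norm (g n * of_real r ^ n)" for n
  proof -
    have "norm (f n) * norm (of_real r ^ n :: complex) \<le> norm (g n) * norm (of_real r ^ n :: complex)"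
      by (rule mult_right_mono[OF le]) simp
    then show ?thesis by (simp add: norm_mult)
  qed
  have "summable (\<lambda>n. norm (f n * of_real r ^ n))"
    by (rule summable_comparison_test'[OF s c])
  then show "summable (\<lambda>n. f n * of_real r ^ n)" by (rule summable_norm_cancel)
qed

lemma conv_radius_pow: "1 \<le> conv_radius (\<lambda>n. (of_nat n :: complex) ^ j)"
proof (induction j)
  case 0
  show ?case
  proof (rule conv_radius_geI_ex')
    fix r :: real assume r: "0 < r" "ereal r < 1"
    then have "norm (of_real r :: complex) < 1" by simp
    then show "summable (\<lambda>n. (of_nat n :: complex) ^ 0 * of_real r ^ n)"
      using summable_geometric by simp
  qed
next
  case (Suc j)
  define f where "f = Abs_fps (\<lambda>n. (of_nat n :: complex) ^ j)"
  have e: "Abs_fps (\<lambda>n. (of_nat n :: complex) ^ Suc j) = fps_X * fps_deriv f"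
    by (rule fps_ext) (auto simp: f_def of_nat_diff)
  have "1 \<le> fps_conv_radius f" using Suc by (simp add: fps_conv_radius_def f_def)
  also have "\<dots> \<le> fps_conv_radius (fps_deriv f)" by (rule fps_conv_radius_deriv)
  also have "\<dots> = min (fps_conv_radius (fps_X :: complex fps)) (fps_conv_radius (fps_deriv f))" by simp
  also have "\<dots> \<le> fps_conv_radius (fps_X * fps_deriv f)" by (rule fps_conv_radius_mult)
  also have "\<dots> = conv_radius (\<lambda>n. (of_nat n :: complex) ^ Suc j)"
    unfolding e[symmetric] by (simp add: fps_conv_radius_def)
  finally show ?case .
qed

lemma divsigma_le: "divsigma k n \<le> n ^ Suc k"
proof (cases "n = 0")
  case True then show ?thesis by simp
next
  case False
  have sub: "{d. d dvd n} \<subseteq> {1..n}" using False by (auto intro: dvd_imp_le Nat.gr0I)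
  have "divsigma k n \<le> card {d. d dvd n} * n ^ k"
    unfolding divsigma_def by (rule sum_bounded_above[where K="n^k", simplified]) (use False in \<open>auto intro: power_mono dvd_imp_le\<close>)
  also have "card {d. d dvd n} \<le> n" using card_mono[OF _ sub] by simp
  then have "card {d. d dvd n} * n ^ k \<le> n * n ^ k" by simp
  finally show ?thesis by simp
qed

lemma rad_gs: "1 \<le> fps_conv_radius (gs k)"
proof -
  have "1 \<le> conv_radius (\<lambda>n. (of_nat n :: complex) ^ Suc k)" by (rule conv_radius_pow)
  also have "\<dots> \<le> conv_radius (\<lambda>n. (of_nat (divsigma k n) :: complex))"
  proof (rule conv_radius_compare)
    fix n
    have a: "real (divsigma k n) \<le> real (n ^ Suc k)" using divsigma_le[of k n] by linarith
    have b: "norm (of_nat (divsigma k n) :: complex) = real (divsigma k n)" by (rule norm_of_nat)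
    have c: "norm ((of_nat n :: complex) ^ Suc k) = real (n ^ Suc k)" unfolding norm_power norm_of_nat by simp
    show "norm (of_nat (divsigma k n) :: complex) \<le> norm ((of_nat n :: complex) ^ Suc k)"
      unfolding b c by (rule a)
  qed
  finally show ?thesis by (simp add: fps_conv_radius_def gs_def)
qed

lemma th_eq: "th f = fps_X * fps_deriv f"
  by (rule fps_ext) (auto simp: of_nat_diff)

lemma rad_th: "1 \<le> fps_conv_radius f \<Longrightarrow> 1 \<le> fps_conv_radius (th f)"
proof -
  assume a: "1 \<le> fps_conv_radius f"
  also have "\<dots> \<le> fps_conv_radius (fps_deriv f)" by (rule fps_conv_radius_deriv)
  also have "\<dots> = min (fps_conv_radius (fps_X :: complex fps)) (fps_conv_radius (fps_deriv f))" by simp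
  also have "\<dots> \<le> fps_conv_radius (fps_X * fps_deriv f)" by (rule fps_conv_radius_mult)
  finally show ?thesis by (simp add: th_eq)
qed

lemma rad_mult: "1 \<le> fps_conv_radius f \<Longrightarrow> 1 \<le> fps_conv_radius g \<Longrightarrow> 1 \<le> fps_conv_radius (f * g :: complex fps)"
  using fps_conv_radius_mult[of f g] by (simp add: min_def split: if_splits)

lemma rad_add: "1 \<le> fps_conv_radius f \<Longrightarrow> 1 \<le> fps_conv_radius g \<Longrightarrow> 1 \<le> fps_conv_radius (f + g :: complex fps)"
  using fps_conv_radius_add[of f g] by (simp add: min_def split: if_splits)

lemma rad_diff: "1 \<le> fps_conv_radius f \<Longrightarrow> 1 \<le> fps_conv_radius g \<Longrightarrow> 1 \<le> fps_conv_radius (f - g :: complex fps)"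
  using fps_conv_radius_diff[of f g] by (simp add: min_def split: if_splits)

lemma rad_num: "1 \<le> fps_conv_radius (numeral n :: complex fps)" by simp
lemma rad_one: "1 \<le> fps_conv_radius (1 :: complex fps)" by simp

lemma rad_PP: "1 \<le> fps_conv_radius PP" unfolding PP_def by (intro rad_diff rad_mult rad_one rad_num rad_gs)
lemma rad_QQ: "1 \<le> fps_conv_radius QQ" unfolding QQ_def by (intro rad_add rad_mult rad_one rad_num rad_gs)
lemma rad_RR: "1 \<le> fps_conv_radius RR" unfolding RR_def by (intro rad_diff rad_mult rad_one rad_num rad_gs)

lemma H_open: "open upper_half_plane"
  unfolding upper_half_plane_def by (rule open_halfspace_Im_gt)

lemma qnome_norm: "Im \<tau> > 0 \<Longrightarrow> norm (qnome \<tau>) < 1"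
  by (simp add: qnome_def)

lemma ev_lt: "Im \<tau> > 0 \<Longrightarrow> 1 \<le> fps_conv_radius f \<Longrightarrow> ereal (norm (qnome \<tau>)) < fps_conv_radius f"
proof -
  assume "Im \<tau> > 0" "1 \<le> fps_conv_radius f"
  moreover have "ereal (norm (qnome \<tau>)) < 1" using qnome_norm[OF \<open>Im \<tau> > 0\<close>] by simp
  ultimately show ?thesis by (meson less_le_trans)
qed

lemma qnome_deriv: "(qnome has_field_derivative (2 * of_real pi * \<i>) * qnome \<tau>) (at \<tau>)"
  unfolding qnome_def[abs_def]
  by (auto intro!: derivative_eq_intros simp: algebra_simps)

lemma ev_mult: "Im \<tau> > 0 \<Longrightarrow> 1 \<le> fps_conv_radius f \<Longrightarrow> 1 \<le> fps_conv_radius g \<Longrightarrow>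
   eval_fps (f * g) (qnome \<tau>) = eval_fps f (qnome \<tau>) * eval_fps g (qnome \<tau>)"
  by (intro eval_fps_mult ev_lt)

lemma ev_add: "Im \<tau> > 0 \<Longrightarrow> 1 \<le> fps_conv_radius f \<Longrightarrow> 1 \<le> fps_conv_radius g \<Longrightarrow>
   eval_fps (f + g) (qnome \<tau>) = eval_fps f (qnome \<tau>) + eval_fps g (qnome \<tau>)"
  by (intro eval_fps_add ev_lt)

lemma ev_diff: "Im \<tau> > 0 \<Longrightarrow> 1 \<le> fps_conv_radius f \<Longrightarrow> 1 \<le> fps_conv_radius g \<Longrightarrow>
   eval_fps (f - g) (qnome \<tau>) = eval_fps f (qnome \<tau>) - eval_fps g (qnome \<tau>)"
  by (intro eval_fps_diff ev_lt)

lemma ev_th: "Im \<tau> > 0 \<Longrightarrow> 1 \<le> fps_conv_radius f \<Longrightarrow>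
   eval_fps (th f) (qnome \<tau>) = qnome \<tau> * eval_fps (fps_deriv f) (qnome \<tau>)"
proof -
  assume a: "Im \<tau> > 0" "1 \<le> fps_conv_radius f"
  have "1 \<le> fps_conv_radius (fps_deriv f)" using a(2) fps_conv_radius_deriv[of f] by (meson order_trans)
  then show ?thesis unfolding th_eq using a by (subst ev_mult) auto
qed

lemma qser_deriv:
  assumes "Im \<tau> > 0" "1 \<le> fps_conv_radius f"
  shows "((\<lambda>t. eval_fps f (qnome t)) has_field_derivative (2 * of_real pi * \<i>) * eval_fps (th f) (qnome \<tau>)) (at \<tau>)"
proof -
  have "((\<lambda>t. eval_fps f (qnome t)) has_field_derivative eval_fps (fps_deriv f) (qnome \<tau>) * ((2 * of_real pi * \<i>) * qnome \<tau>)) (at \<tau>)"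
    by (rule DERIV_chain2[OF has_field_derivative_eval_fps[OF ev_lt[OF assms]] qnome_deriv])
  then show ?thesis using ev_th[OF assms] by (simp add: algebra_simps)
qed

lemma eis_eval: "Im \<tau> > 0 \<Longrightarrow> eis_series k \<tau> = eval_fps (gs k) (qnome \<tau>)"
proof -
  assume a: "Im \<tau> > 0"
  have "(\<lambda>n. gs k $ n * qnome \<tau> ^ n) sums eval_fps (gs k) (qnome \<tau>)"
    by (rule sums_eval_fps[OF ev_lt[OF a rad_gs]])
  then have "(\<lambda>n. gs k $ Suc n * qnome \<tau> ^ Suc n) sums eval_fps (gs k) (qnome \<tau>)"
    using sums_Suc_iff[of "\<lambda>n. gs k $ n * qnome \<tau> ^ n"] by simp
  then show ?thesis unfolding eis_series_def by (simp add: sums_iff)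
qed

lemma E2_eq: "\<tau> \<in> upper_half_plane \<Longrightarrow> E2 \<tau> = eval_fps PP (qnome \<tau>)"
  unfolding upper_half_plane_def PP_def
  by (simp add: ev_diff ev_mult rad_mult rad_gs eis_eval E2_def)

lemma E4_eq: "\<tau> \<in> upper_half_plane \<Longrightarrow> E4 \<tau> = eval_fps QQ (qnome \<tau>)"
  unfolding upper_half_plane_def QQ_def
  by (simp add: ev_add ev_mult rad_mult rad_gs eis_eval E4_def)

lemma E6_eq: "\<tau> \<in> upper_half_plane \<Longrightarrow> E6 \<tau> = eval_fps RR (qnome \<tau>)"
  unfolding upper_half_plane_def RR_def
  by (simp add: ev_diff ev_mult rad_mult rad_gs eis_eval E6_def)

lemma transf:
  assumes "\<tau> \<in> upper_half_plane" "1 \<le> fps_conv_radius f"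
    and "\<And>t. t \<in> upper_half_plane \<Longrightarrow> E t = eval_fps f (qnome t)"
  shows "(E has_field_derivative (2 * of_real pi * \<i>) * eval_fps (th f) (qnome \<tau>)) (at \<tau>)"
proof (rule has_field_derivative_transform_within_open[OF _ H_open assms(1)])
  show "((\<lambda>t. eval_fps f (qnome t)) has_field_derivative (2 * of_real pi * \<i>) * eval_fps (th f) (qnome \<tau>)) (at \<tau>)"
    using assms(1,2) by (intro qser_deriv) (auto simp: upper_half_plane_def)
  show "\<And>x. x \<in> upper_half_plane \<Longrightarrow> eval_fps f (qnome x) = E x" using assms(3) by simp
qed

lemma dE2:
  assumes "\<tau> \<in> upper_half_plane"
  shows "(E2 has_field_derivative (2 * of_real pi * \<i>) * ((E2 \<tau> * E2 \<tau> - E4 \<tau>) / 12)) (at \<tau>)"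
proof -
  have t: "Im \<tau> > 0" using assms by (simp add: upper_half_plane_def)
  have "eval_fps (12 * th PP) (qnome \<tau>) = eval_fps (PP * PP - QQ) (qnome \<tau>)" by (simp only: R1)
  then have "12 * eval_fps (th PP) (qnome \<tau>) = E2 \<tau> * E2 \<tau> - E4 \<tau>"
    using t assms by (simp add: ev_mult ev_diff rad_mult rad_th rad_PP rad_QQ E2_eq E4_eq)
  then have e: "eval_fps (th PP) (qnome \<tau>) = (E2 \<tau> * E2 \<tau> - E4 \<tau>) / 12"
    by (metis mult.commute nonzero_mult_div_cancel_left zero_neq_numeral)
  show ?thesis using transf[OF assms rad_PP E2_eq] unfolding e .
qed

lemma dE4:
  assumes "\<tau> \<in> upper_half_plane"
  shows "(E4 has_field_derivative (2 * of_real pi * \<i>) * ((E2 \<tau> * E4 \<tau> - E6 \<tau>) / 3)) (at \<tau>)"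
proof -
  have t: "Im \<tau> > 0" using assms by (simp add: upper_half_plane_def)
  have "eval_fps (3 * th QQ) (qnome \<tau>) = eval_fps (PP * QQ - RR) (qnome \<tau>)" by (simp only: R2)
  then have "3 * eval_fps (th QQ) (qnome \<tau>) = E2 \<tau> * E4 \<tau> - E6 \<tau>"
    using t assms by (simp add: ev_mult ev_diff rad_mult rad_th rad_PP rad_QQ rad_RR E2_eq E4_eq E6_eq)
  then have e: "eval_fps (th QQ) (qnome \<tau>) = (E2 \<tau> * E4 \<tau> - E6 \<tau>) / 3"
    by (metis mult.commute nonzero_mult_div_cancel_left zero_neq_numeral)
  show ?thesis using transf[OF assms rad_QQ E4_eq] unfolding e .
qed

lemma dE6:
  assumes "\<tau> \<in> upper_half_plane"
  shows "(E6 has_field_derivative (2 * of_real pi * \<i>) * ((E2 \<tau> * E6 \<tau> - E4 \<tau> * E4 \<tau>) / 2)) (at \<tau>)"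
proof -
  have t: "Im \<tau> > 0" using assms by (simp add: upper_half_plane_def)
  have "eval_fps (2 * th RR) (qnome \<tau>) = eval_fps (PP * RR - QQ * QQ) (qnome \<tau>)" by (simp only: R3)
  then have "2 * eval_fps (th RR) (qnome \<tau>) = E2 \<tau> * E6 \<tau> - E4 \<tau> * E4 \<tau>"
    using t assms by (simp add: ev_mult ev_diff rad_mult rad_th rad_PP rad_QQ rad_RR E2_eq E4_eq E6_eq)
  then have e: "eval_fps (th RR) (qnome \<tau>) = (E2 \<tau> * E6 \<tau> - E4 \<tau> * E4 \<tau>) / 2"
    by (metis mult.commute nonzero_mult_div_cancel_left zero_neq_numeral)
  show ?thesis using transf[OF assms rad_RR E6_eq] unfolding e .
qed
lemma alg1:
  fixes c K a b d y y1 y2 :: complex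
  assumes c: "c \<noteq> 0"
    and ode: "y2 / c / c - (K + 1) / 6 * a * (y1 / c) + K * (K + 1) / 12 * ((a * a - b) / 12) * y = 0"
  shows "(K * (y1 * ((a*b - d)/3) + y * ((c*((a*a-b)/12) * b + a * (c*((a*b-d)/3)) - c*((a*d - b*b)/2))/3))
          - 4 * ((y2/c) * b + (y1/c) * (c*((a*b-d)/3)))) / c
         - (K + 6) / 12 * a * (K * y * ((a*b - d)/3) - 4 * (y1/c) * b)
         = (K - 4) / 18 * (K * y * ((a*d - b*b)/2) - 6 * (y1/c) * d)"
proof -
  have q: "y2 / c / c = (K + 1) / 6 * a * (y1 / c) - K * (K + 1) / 12 * ((a * a - b) / 12) * y"
  proof -
    have "y2 / c / c = (y2 / c / c - (K + 1) / 6 * a * (y1 / c) + K * (K + 1) / 12 * ((a * a - b) / 12) * y)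
       + ((K + 1) / 6 * a * (y1 / c) - K * (K + 1) / 12 * ((a * a - b) / 12) * y)" by simp
    also have "\<dots> = (K + 1) / 6 * a * (y1 / c) - K * (K + 1) / 12 * ((a * a - b) / 12) * y" using ode by simp
    finally show ?thesis .
  qed
  have y2: "y2 = c * c * ((K + 1) / 6 * a * (y1 / c) - K * (K + 1) / 12 * ((a * a - b) / 12) * y)"
    unfolding q[symmetric] using c by simp
  show ?thesis unfolding y2 using c by (simp add: field_simps)
qed

lemma alg2:
  fixes c K a b d y y1 y2 :: complex
  assumes c: "c \<noteq> 0"
    and ode: "y2 / c / c - (K + 1) / 6 * a * (y1 / c) + K * (K + 1) / 12 * ((a * a - b) / 12) * y = 0"
  shows "(K * (y1 * ((a*d - b*b)/2) + y * ((c*((a*a-b)/12) * d + a * (c*((a*d-b*b)/2)) - (c*((a*b-d)/3) * b + b * (c*((a*b-d)/3))))/2))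
          - 6 * ((y2/c) * d + (y1/c) * (c*((a*d-b*b)/2)))) / c
         - (K + 8) / 12 * a * (K * y * ((a*d - b*b)/2) - 6 * (y1/c) * d)
         = (K - 6) / 8 * b * (K * y * ((a*b - d)/3) - 4 * (y1/c) * b)"
proof -
  have q: "y2 / c / c = (K + 1) / 6 * a * (y1 / c) - K * (K + 1) / 12 * ((a * a - b) / 12) * y"
  proof -
    have "y2 / c / c = (y2 / c / c - (K + 1) / 6 * a * (y1 / c) + K * (K + 1) / 12 * ((a * a - b) / 12) * y)
       + ((K + 1) / 6 * a * (y1 / c) - K * (K + 1) / 12 * ((a * a - b) / 12) * y)" by simp
    also have "\<dots> = (K + 1) / 6 * a * (y1 / c) - K * (K + 1) / 12 * ((a * a - b) / 12) * y" using ode by simp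
    finally show ?thesis .
  qed
  have y2: "y2 = c * c * ((K + 1) / 6 * a * (y1 / c) - K * (K + 1) / 12 * ((a * a - b) / 12) * y)"
    unfolding q[symmetric] using c by simp
  show ?thesis unfolding y2 using c by (simp add: field_simps)
qed

theorem mainTheorem5:
  fixes k :: real and F :: "complex \<Rightarrow> complex"
  assumes "\<exists>n::nat. k = real n / 2"
    and "F holomorphic_on upper_half_plane"
    and "\<forall>\<tau>\<in>upper_half_plane.
           qderiv (qderiv F) \<tau> - of_real ((k + 1) / 6) * E2 \<tau> * qderiv F \<tau>
           + of_real (k * (k + 1) / 12) * qderiv E2 \<tau> * F \<tau> = 0"
  shows "(\<forall>\<tau>\<in>upper_half_plane.
           serre_deriv (of_real (k + 6)) (rc_bracket (of_real k) 4 F E4) \<tau>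
             = of_real ((k - 4) / 18) * rc_bracket (of_real k) 6 F E6 \<tau>)
       \<and> (\<forall>\<tau>\<in>upper_half_plane.
           serre_deriv (of_real (k + 8)) (rc_bracket (of_real k) 6 F E6) \<tau>
             = of_real ((k - 6) / 8) * E4 \<tau> * rc_bracket (of_real k) 4 F E4 \<tau>)"
proof -
  define c where "c = 2 * of_real pi * \<i>"
  have c0: "c \<noteq> 0" by (simp add: c_def)
  define K where "K = (of_real k :: complex)"
  define F1 where "F1 = deriv F"
  define F2 where "F2 = deriv F1"
  have hol1: "F1 holomorphic_on upper_half_plane"
    unfolding F1_def by (rule holomorphic_deriv[OF assms(2) H_open])
  have dF: "\<And>t. t \<in> upper_half_plane \<Longrightarrow> (F has_field_derivative F1 t) (at t)"
    unfolding F1_def by (rule holomorphic_derivI[OF assms(2) H_open])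
  have dF1: "\<And>t. t \<in> upper_half_plane \<Longrightarrow> (F1 has_field_derivative F2 t) (at t)"
    unfolding F2_def by (rule holomorphic_derivI[OF hol1 H_open])
  have qF: "qderiv F = (\<lambda>t. F1 t / c)"
    by (rule ext) (simp add: qderiv_def F1_def c_def)
  have qqF: "\<And>t. t \<in> upper_half_plane \<Longrightarrow> qderiv (qderiv F) t = F2 t / c / c"
  proof -
    fix t assume t: "t \<in> upper_half_plane"
    have "deriv (\<lambda>t. F1 t / c) t = F2 t / c"
      by (rule DERIV_imp_deriv, rule DERIV_cdivide, rule dF1[OF t])
    then show "qderiv (qderiv F) t = F2 t / c / c"
      unfolding qF by (simp add: qderiv_def c_def)
  qed
  have qE: "\<And>E D t. (E has_field_derivative c * D) (at t) \<Longrightarrow> qderiv E t = D"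
    using c0 by (simp add: qderiv_def c_def[symmetric] DERIV_imp_deriv)
  have qE2: "\<And>t. t \<in> upper_half_plane \<Longrightarrow> qderiv E2 t = (E2 t * E2 t - E4 t) / 12"
    using dE2 qE unfolding c_def by blast
  have qE4: "\<And>t. t \<in> upper_half_plane \<Longrightarrow> qderiv E4 t = (E2 t * E4 t - E6 t) / 3"
    using dE4 qE unfolding c_def by blast
  have qE6: "\<And>t. t \<in> upper_half_plane \<Longrightarrow> qderiv E6 t = (E2 t * E6 t - E4 t * E4 t) / 2"
    using dE6 qE unfolding c_def by blast
  define G4 where "G4 = (\<lambda>t. K * F t * ((E2 t * E4 t - E6 t) / 3) - 4 * (F1 t / c) * E4 t)"
  define G6 where "G6 = (\<lambda>t. K * F t * ((E2 t * E6 t - E4 t * E4 t) / 2) - 6 * (F1 t / c) * E6 t)"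
  have B4: "\<And>t. t \<in> upper_half_plane \<Longrightarrow> rc_bracket K 4 F E4 t = G4 t"
    unfolding rc_bracket_def G4_def qF using qE4 by simp
  have B6: "\<And>t. t \<in> upper_half_plane \<Longrightarrow> rc_bracket K 6 F E6 t = G6 t"
    unfolding rc_bracket_def G6_def qF using qE6 by simp
  have dE2': "\<And>t. t \<in> upper_half_plane \<Longrightarrow> (E2 has_field_derivative c * ((E2 t * E2 t - E4 t) / 12)) (at t)"
    unfolding c_def by (rule dE2)
  have dE4': "\<And>t. t \<in> upper_half_plane \<Longrightarrow> (E4 has_field_derivative c * ((E2 t * E4 t - E6 t) / 3)) (at t)"
    unfolding c_def by (rule dE4)
  have dE6': "\<And>t. t \<in> upper_half_plane \<Longrightarrow> (E6 has_field_derivative c * ((E2 t * E6 t - E4 t * E4 t) / 2)) (at t)"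
    unfolding c_def by (rule dE6)
  show ?thesis
  proof (intro conjI ballI)
    fix \<tau> assume t: "\<tau> \<in> upper_half_plane"
    have ode: "F2 \<tau> / c / c - (K + 1) / 6 * E2 \<tau> * (F1 \<tau> / c) + K * (K + 1) / 12 * ((E2 \<tau> * E2 \<tau> - E4 \<tau>) / 12) * F \<tau> = 0"
    proof -
      have o1: "qderiv (qderiv F) \<tau> - of_real ((k + 1) / 6) * E2 \<tau> * qderiv F \<tau>
           + of_real (k * (k + 1) / 12) * qderiv E2 \<tau> * F \<tau> = 0" using assms(3) t by blast
      have o2: "F2 \<tau> / c / c - of_real ((k + 1) / 6) * E2 \<tau> * (F1 \<tau> / c)
           + of_real (k * (k + 1) / 12) * ((E2 \<tau> * E2 \<tau> - E4 \<tau>) / 12) * F \<tau> = 0"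
        using o1 unfolding qqF[OF t] qE2[OF t] by (simp add: qF)
      show ?thesis using o2 unfolding K_def by simp
    qed
    have dG4: "(G4 has_field_derivative
        (K * (F1 \<tau> * ((E2 \<tau> * E4 \<tau> - E6 \<tau>)/3) + F \<tau> * ((c*((E2 \<tau> * E2 \<tau> - E4 \<tau>)/12) * E4 \<tau> + E2 \<tau> * (c*((E2 \<tau> * E4 \<tau> - E6 \<tau>)/3)) - c*((E2 \<tau> * E6 \<tau> - E4 \<tau> * E4 \<tau>)/2))/3))
          - 4 * ((F2 \<tau> / c) * E4 \<tau> + (F1 \<tau> / c) * (c*((E2 \<tau> * E4 \<tau> - E6 \<tau>)/3))))) (at \<tau>)"
      unfolding G4_def
      using c0 by (auto intro!: derivative_eq_intros dF[OF t] dF1[OF t] dE2'[OF t] dE4'[OF t] dE6'[OF t] simp: field_simps)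
    have dG6: "(G6 has_field_derivative
        (K * (F1 \<tau> * ((E2 \<tau> * E6 \<tau> - E4 \<tau> * E4 \<tau>)/2) + F \<tau> * ((c*((E2 \<tau> * E2 \<tau> - E4 \<tau>)/12) * E6 \<tau> + E2 \<tau> * (c*((E2 \<tau> * E6 \<tau> - E4 \<tau> * E4 \<tau>)/2)) - (c*((E2 \<tau> * E4 \<tau> - E6 \<tau>)/3) * E4 \<tau> + E4 \<tau> * (c*((E2 \<tau> * E4 \<tau> - E6 \<tau>)/3))))/2))
          - 6 * ((F2 \<tau> / c) * E6 \<tau> + (F1 \<tau> / c) * (c*((E2 \<tau> * E6 \<tau> - E4 \<tau> * E4 \<tau>)/2))))) (at \<tau>)"
      unfolding G6_def
      using c0 by (auto intro!: derivative_eq_intros dF[OF t] dF1[OF t] dE2'[OF t] dE4'[OF t] dE6'[OF t] simp: field_simps)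
    have D4: "deriv (rc_bracket K 4 F E4) \<tau> =
        (K * (F1 \<tau> * ((E2 \<tau> * E4 \<tau> - E6 \<tau>)/3) + F \<tau> * ((c*((E2 \<tau> * E2 \<tau> - E4 \<tau>)/12) * E4 \<tau> + E2 \<tau> * (c*((E2 \<tau> * E4 \<tau> - E6 \<tau>)/3)) - c*((E2 \<tau> * E6 \<tau> - E4 \<tau> * E4 \<tau>)/2))/3))
          - 4 * ((F2 \<tau> / c) * E4 \<tau> + (F1 \<tau> / c) * (c*((E2 \<tau> * E4 \<tau> - E6 \<tau>)/3))))"
      by (rule DERIV_imp_deriv, rule has_field_derivative_transform_within_open[OF dG4 H_open t]) (simp add: B4)
    have D6: "deriv (rc_bracket K 6 F E6) \<tau> =
        (K * (F1 \<tau> * ((E2 \<tau> * E6 \<tau> - E4 \<tau> * E4 \<tau>)/2) + F \<tau> * ((c*((E2 \<tau> * E2 \<tau> - E4 \<tau>)/12) * E6 \<tau> + E2 \<tau> * (c*((E2 \<tau> * E6 \<tau> - E4 \<tau> * E4 \<tau>)/2)) - (c*((E2 \<tau> * E4 \<tau> - E6 \<tau>)/3) * E4 \<tau> + E4 \<tau> * (c*((E2 \<tau> * E4 \<tau> - E6 \<tau>)/3))))/2))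
          - 6 * ((F2 \<tau> / c) * E6 \<tau> + (F1 \<tau> / c) * (c*((E2 \<tau> * E6 \<tau> - E4 \<tau> * E4 \<tau>)/2))))"
      by (rule DERIV_imp_deriv, rule has_field_derivative_transform_within_open[OF dG6 H_open t]) (simp add: B6)
    note a1 = alg1[where d="E6 \<tau>", OF c0 ode]
    note a2 = alg2[where d="E6 \<tau>", OF c0 ode]
    show "serre_deriv (of_real (k + 6)) (rc_bracket (of_real k) 4 F E4) \<tau>
             = of_real ((k - 4) / 18) * rc_bracket (of_real k) 6 F E6 \<tau>"
      unfolding K_def[symmetric] serre_deriv_def qderiv_def c_def[symmetric] D4 B4[OF t] B6[OF t]
      using a1 unfolding G4_def G6_def by (simp add: K_def)
    show "serre_deriv (of_real (k + 8)) (rc_bracket (of_real k) 6 F E6) \<tau>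
             = of_real ((k - 6) / 8) * E4 \<tau> * rc_bracket (of_real k) 4 F E4 \<tau>"
      unfolding K_def[symmetric] serre_deriv_def qderiv_def c_def[symmetric] D6 B4[OF t] B6[OF t]
      using a2 unfolding G4_def G6_def by (simp add: K_def mult.assoc)
  qed
qed

end
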